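(* Let $d\ge1$, $b\ge2$, $0\le t\le m$, $n=b^m$, $\Theta\subset\mathbb{R}$, and measurable $g_\theta:(0,1)^d\to\mathbb{R}$ for $\theta\in\Theta$. Assume that for every $\theta\in\Theta$, $g_\theta(\boldsymbol u)$ is a continuous random variable whenever $d-1$ components of $\boldsymbol u$ are fixed and the remaining component is uniformly distributed over an open interval in $(0,1)$. Fix $\theta\in\Theta$, let $\{\tilde{\boldsymbol u}_1,\dots,\tilde{\boldsymbol u}_n\}$ be a scrambled $(t,m,d)$-net in base $b$, and let $L_i=g_\theta(\tilde{\boldsymbol u}_i)$. Then with probability one, for every $y\in\mathbb{R}$, at most $b^t$ of the observations $L_1,\dots,L_n$ are equal to $y$.
   Context: A $(t,m,d)$-net in base $b$ is a finite sequence of $b^m$ points in $[0,1)^d$ such that every box $\prod_{j=1}^d[t_jb^{-k_j},(t_j+1)b^{-k_j})$ (nonnegative integers $k_j$, $0\le t_j<b^{k_j}$) of volume $b^{t-m}$ contains exactly $b^t$ of the points. The scrambled net $\tilde{\boldsymbol u}_1,\dots,\tilde{\boldsymbol u}_n$ is obtained from a $(t,m,d)$-net $\boldsymbol u_1,\dots,\boldsymbol u_n$ by Owen's nested uniform scrambling: writing $u_i^j=\sum_{k\ge1}a_{ijk}b^{-k}$, set $\tilde u_i^j=\sum_{k\ge1}\tilde a_{ijk}b^{-k}$ with $\tilde a_{ij1}=\pi_j(a_{ij1})$ and $\tilde a_{ijk}=\pi_{ja_{ij1}\cdots a_{ij,k-1}}(a_{ijk})$, where the permutations $\pi_\bullet$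 are mutually independent and each uniformly distributed over the $b!$ permutations of $\{0,\dots,b-1\}$. *)

theory Defs
  imports "HOL-Probability.Probability"
begin

definition open_unit_cube :: "(real ^ 'd) set" where
  "open_unit_cube = {x. \<forall>j. 0 < x $ j \<and> x $ j < 1}"

definition coord_upd :: "real ^ 'd \<Rightarrow> 'd \<Rightarrow> real \<Rightarrow> real ^ 'd" where
  "coord_upd v j x = (\<chi> k. if k = j then x else v $ k)"

text \<open>The k-th base-b digit (k \<ge> 1) of x in [0,1): x = sum_{k\<ge>1} digit b x k * b^(-k),
  using the standard expansion (not ending in infinitely many digits b-1).\<close>
definition digit :: "nat \<Rightarrow> real \<Rightarrow> nat \<Rightarrow> nat" where
  "digit b x k = nat \<lfloor>x * real b ^ k\<rfloor> mod b"

text \<open>(t,m,d)-net in base b: the points u 0, ..., u (b^m - 1) lie in [0,1)^d and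
  every elementary b-adic box of volume b^(t-m) contains exactly b^t of them.\<close>
definition tmd_net :: "nat \<Rightarrow> nat \<Rightarrow> nat \<Rightarrow> (nat \<Rightarrow> real ^ 'd) \<Rightarrow> bool" where
  "tmd_net b t m u \<longleftrightarrow>
     (\<forall>i < b ^ m. \<forall>j. 0 \<le> u i $ j \<and> u i $ j < 1) \<and>
     (\<forall>(k :: 'd \<Rightarrow> nat) (c :: 'd \<Rightarrow> nat).
        real b ^ t / real b ^ m = 1 / real b ^ (\<Sum>j\<in>UNIV. k j) \<and> (\<forall>j. c j < b ^ k j) \<longrightarrow>
        card {i. i < b ^ m \<and>
                 (\<forall>j. real (c j) / real b ^ k j \<le> u i $ j \<and>
                      u i $ j < real (c j + 1) / real b ^ k j)} = b ^ t)"

text \<open>Owen's nested uniform scrambling of coordinate j of a value x, given the family of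
  permutations perm indexed by (j, [a_1, ..., a_(k-1)]): the k-th scrambled digit is
  pi_(j a_1 ... a_(k-1)) (a_k); for k = 1 the index is (j, []), i.e. pi_j.\<close>
definition scramble_coord ::
    "nat \<Rightarrow> ('d \<times> nat list \<Rightarrow> nat \<Rightarrow> nat) \<Rightarrow> 'd \<Rightarrow> real \<Rightarrow> real" where
  "scramble_coord b perm j x =
     (\<Sum>k. real (perm (j, map (digit b x) [1..<Suc k]) (digit b x (Suc k))) / real b ^ Suc k)"

definition scramble_point ::
    "nat \<Rightarrow> ('d \<times> nat list \<Rightarrow> nat \<Rightarrow> nat) \<Rightarrow> real ^ 'd \<Rightarrow> real ^ 'd" where
  "scramble_point b perm u = (\<chi> j. scramble_coord b perm j (u $ j))"

end

theory Submission
  imports Defs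
begin

lemma card_PS_fix:
  assumes "x < b" "d < b"
  shows "card {p. p permutes {0..<b} \<and> p x = d} = fact (b - 1)"
proof -
  let ?A = "{p. p permutes {0..<b} \<and> p x = d}"
  let ?B = "{q. q permutes ({0..<b} - {x})}"
  have "bij_betw (\<lambda>p. Transposition.transpose x d \<circ> p) ?A ?B"
  proof (rule bij_betw_byWitness[where f'="\<lambda>p. Transposition.transpose x d \<circ> p"])
    show "\<forall>a\<in>?A. Transposition.transpose x d \<circ> (Transposition.transpose x d \<circ> a) = a"
      by (auto simp: fun_eq_iff)
    show "\<forall>a\<in>?B. Transposition.transpose x d \<circ> (Transposition.transpose x d \<circ> a) = a"
      by (auto simp: fun_eq_iff)
    show "(\<lambda>p. Transposition.transpose x d \<circ> p) ` ?A \<subseteq> ?B"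
    proof safe
      fix p assume p: "p permutes {0..<b}" "d = p x"
      have "Transposition.transpose x (p x) \<circ> p permutes {0..<b}"
        using assms p by (intro permutes_compose permutes_swap_id) auto
      then show "Transposition.transpose x (p x) \<circ> p permutes {0..<b} - {x}"
        by (rule permutes_superset) auto
    qed
    show "(\<lambda>p. Transposition.transpose x d \<circ> p) ` ?B \<subseteq> ?A"
    proof safe
      fix q assume q: "q permutes {0..<b} - {x}"
      then have q': "q permutes {0..<b}" by (rule permutes_subset) auto
      have qx: "q x = x" using q by (simp add: permutes_not_in)
      show "Transposition.transpose x d \<circ> q permutes {0..<b}"
        using assms q' by (intro permutes_compose permutes_swap_id) auto
      show "(Transposition.transpose x d \<circ> q) x = d" using qx by simp
    qed
  qed
  then have "card ?A = card ?B" by (rule bij_betw_same_card)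
  also have "\<dots> = fact (card ({0..<b} - {x}))"
    by (rule card_permutations) auto
  also have "card ({0..<b} - {x}) = b - 1" using assms by simp
  finally show ?thesis .
qed

lemma measure_PS_fix:
  assumes "x < b" "d < b"
  shows "measure (uniform_count_measure {p. p permutes {0..<b}}) {p. p permutes {0..<b} \<and> p x = d} = 1 / real b"
proof -
  have "card {p. p permutes {0..<b}} = fact b" by (rule card_permutations) auto
  moreover have "fact b = b * fact (b - 1)" using assms by (simp add: fact_reduce)
  ultimately show ?thesis
    using assms by (subst measure_uniform_count_measure) (auto simp: card_PS_fix finite_permutations)
qed

primrec Vf :: "nat \<Rightarrow> (nat \<Rightarrow> nat) \<Rightarrow> nat \<Rightarrow> nat" where
  "Vf b e 0 = 0" | "Vf b e (Suc q) = b * Vf b e q + e q"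

lemma Vf_lt: "(\<forall>i<q. e i < b) \<Longrightarrow> Vf b e q < b ^ q"
proof (induction q)
  case 0 then show ?case by simp
next
  case (Suc q)
  then have V: "Vf b e q + 1 \<le> b ^ q" and eq: "e q < b" by auto
  have "b * Vf b e q + e q < b * Vf b e q + b" using eq by simp
  also have "\<dots> = b * (Vf b e q + 1)" by simp
  also have "\<dots> \<le> b * b ^ q" using V by (intro mult_le_mono2)
  finally show ?case by simp
qed

lemma divmod_char: "0 < (b::nat) \<Longrightarrow> e < b \<Longrightarrow> (b * V + e = c) \<longleftrightarrow> (V = c div b \<and> e = c mod b)"
  by (metis add.commute div_mult_self2 div_less mod_mult_self2 mod_less mod_mult_div_eq
      nat_neq_iff not_less0 plus_nat.add_0 mult.commute)

lemma Vf_eq_iff: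
  assumes "0 < b" "\<forall>i<q. e i < b" "c < b ^ q"
  shows "Vf b e q = c \<longleftrightarrow> (\<forall>i<q. e i = c div b ^ (q - 1 - i) mod b)"
  using assms(2,3)
proof (induction q arbitrary: c)
  case 0 then show ?case by simp
next
  case (Suc q)
  have cb: "c div b < b ^ q" using Suc.prems assms(1)
    by (simp add: div_less_iff_less_mult mult.commute)
  have "Vf b e (Suc q) = c \<longleftrightarrow> Vf b e q = c div b \<and> e q = c mod b"
    using divmod_char[OF assms(1), of "e q" "Vf b e q" c] Suc.prems by simp
  also have "\<dots> \<longleftrightarrow> (\<forall>i<q. e i = c div b div b ^ (q - 1 - i) mod b) \<and> e q = c mod b"
    using Suc.IH[OF _ cb] Suc.prems by simp
  also have "\<dots> \<longleftrightarrow> (\<forall>i<Suc q. e i = c div b ^ (Suc q - 1 - i) mod b)"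
  proof -
    have "c div b div b ^ (q - 1 - i) = c div b ^ (Suc q - 1 - i)" if "i < q" for i
    proof -
      have "Suc q - 1 - i = Suc (q - 1 - i)" using that by simp
      then show ?thesis by (simp add: div_mult2_eq)
    qed
    then show ?thesis by (auto simp: less_Suc_eq)
  qed
  finally show ?case .
qed

lemma Vf_add: "Vf b e (q + k) = b ^ k * Vf b e q + Vf b (\<lambda>i. e (q + i)) k"
  by (induction k) (simp_all add: algebra_simps)

lemma Vf_partial:
  assumes "0 < b"
  shows "(\<Sum>i<q. real (e i) / real b ^ Suc i) = real (Vf b e q) / real b ^ q"
proof (induction q)
  case 0 then show ?case by simp
next
  case (Suc q)
  then show ?case using assms by (simp add: field_simps)
qed

lemma digit_series:
  assumes b: "2 \<le> b" and e: "\<forall>i. e i < b"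
  shows "summable (\<lambda>i. real (e i) / real b ^ Suc i)"
    and "real (Vf b e q) / real b ^ q \<le> (\<Sum>i. real (e i) / real b ^ Suc i)"
    and "(\<Sum>i. real (e i) / real b ^ Suc i) \<le> (real (Vf b e q) + 1) / real b ^ q"
proof -
  let ?f = "\<lambda>i. real (e i) / real b ^ Suc i"
  have nn: "0 \<le> ?f i" for i by simp
  show sf: "summable ?f"
  proof (rule summable_comparison_test')
    show "summable (\<lambda>i. (1 / real b) ^ i)" using b by (intro summable_geometric) auto
    show "norm (?f i) \<le> (1 / real b) ^ i" for i
    proof -
      have "real (e i) \<le> real b" using e[rule_format, of i] by simp
      then have "real (e i) / real b ^ Suc i \<le> real b / real b ^ Suc i"
        using b by (intro divide_right_mono) auto
      also have "\<dots> = (1 / real b) ^ i" using b by (simp add: power_divide field_simps)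
      finally show ?thesis by simp
    qed
  qed
  show "real (Vf b e q) / real b ^ q \<le> suminf ?f"
    using sum_le_suminf[OF sf, of "{..<q}"] nn Vf_partial[of b e q] b by simp
  show "suminf ?f \<le> (real (Vf b e q) + 1) / real b ^ q"
  proof (rule suminf_le_const[OF sf])
    fix n
    show "sum ?f {..<n} \<le> (real (Vf b e q) + 1) / real b ^ q"
    proof (cases "q \<le> n")
      case True
      then obtain k where n: "n = q + k" using le_Suc_ex by blast
      have lt: "Vf b (\<lambda>i. e (q + i)) k < b ^ k" using e by (intro Vf_lt) auto
      have "Vf b e n < b ^ k * (Vf b e q + 1)"
        using lt unfolding n Vf_add by (simp add: algebra_simps)
      then have "real (Vf b e n) \<le> real b ^ k * (real (Vf b e q) + 1)"
        by (metis (mono_tags, lifting) less_imp_le of_nat_1 of_nat_add of_nat_le_iff of_nat_mult of_nat_power)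
      then have "real (Vf b e n) / real b ^ n \<le> real b ^ k * (real (Vf b e q) + 1) / real b ^ n"
        using b by (intro divide_right_mono) auto
      also have "\<dots> = (real (Vf b e q) + 1) / real b ^ q"
        using b unfolding n by (simp add: power_add field_simps)
      finally show ?thesis using b Vf_partial[of b e n] by simp
    next
      case False
      have "sum ?f {..<n} \<le> sum ?f {..<q}" using False nn by (intro sum_mono2) auto
      also have "\<dots> = real (Vf b e q) / real b ^ q" using b Vf_partial[of b e q] by simp
      also have "\<dots> \<le> (real (Vf b e q) + 1) / real b ^ q" using b by (intro divide_right_mono) auto
      finally show ?thesis .
    qed
  qed
qed

lemma digit_lt: "0 < b \<Longrightarrow> digit b x k < b"
  by (simp add: digit_def)

lemma floor_step:
  assumes "0 \<le> x" "0 < b"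
  shows "nat \<lfloor>x * real b ^ Suc s\<rfloor> = b * nat \<lfloor>x * real b ^ s\<rfloor> + digit b x (Suc s)"
proof -
  let ?y = "x * real b ^ Suc s"
  have y0: "0 \<le> ?y" using assms by simp
  have "x * real b ^ s = ?y / real_of_int (int b)" using assms by simp
  then have "\<lfloor>x * real b ^ s\<rfloor> = \<lfloor>?y\<rfloor> div int b"
    using floor_divide_real_eq_div[of "int b" ?y] by simp
  then have "nat \<lfloor>x * real b ^ s\<rfloor> = nat \<lfloor>?y\<rfloor> div b"
    using y0 by (simp add: nat_div_distrib)
  then show ?thesis unfolding digit_def by simp
qed

lemma digits_agree_floor:
  assumes "0 \<le> x" "x < 1" "0 \<le> y" "y < 1" "0 < b"
    and "\<forall>s'\<in>{1..s}. digit b x s' = digit b y s'"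
  shows "nat \<lfloor>x * real b ^ s\<rfloor> = nat \<lfloor>y * real b ^ s\<rfloor>"
  using assms(6)
proof (induction s)
  case 0
  have "\<lfloor>x\<rfloor> = 0" "\<lfloor>y\<rfloor> = 0" using assms by (auto simp: floor_eq_iff)
  then show ?case by simp
next
  case (Suc s)
  then show ?case using floor_step[of x b s] floor_step[of y b s] assms by auto
qed

locale scr = prob_space M for M :: "'w measure" +
  fixes b :: nat and \<pi> :: "'i \<Rightarrow> 'w \<Rightarrow> nat \<Rightarrow> nat"
  assumes b2: "2 \<le> b"
  and indep: "indep_vars (\<lambda>_. uniform_count_measure {p. p permutes {0..<b}}) \<pi> UNIV"
  and unif: "\<forall>\<iota>. distr M (uniform_count_measure {p. p permutes {0..<b}}) (\<pi> \<iota>)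
                  = uniform_count_measure {p. p permutes {0..<b}}"
begin

abbreviation "U \<equiv> uniform_count_measure {p. p permutes {0..<b}}"

lemma pi_meas: "\<pi> \<iota> \<in> measurable M U"
  using indep unfolding indep_vars_def2 by auto

lemma pi_space: "\<omega> \<in> space M \<Longrightarrow> \<pi> \<iota> \<omega> permutes {0..<b}"
  using measurable_space[OF pi_meas] by (simp add: space_uniform_count_measure)

lemma pi_lt: "\<omega> \<in> space M \<Longrightarrow> d < b \<Longrightarrow> \<pi> \<iota> \<omega> d < b"
  using pi_space[of \<omega> \<iota>] permutes_in_image[of "\<pi> \<iota> \<omega>" "{0..<b}" d] by auto

lemma U_meas_any: "h \<in> measurable U (count_space UNIV)"
  by (subst measurable_cong_sets[OF sets_uniform_count_measure_count_space refl])
     (simp add: measurable_count_space_eq1)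

lemma U_meas_borel: "h \<in> borel_measurable U"
  by (subst measurable_cong_sets[OF sets_uniform_count_measure_count_space refl]) simp

lemma dig_meas[measurable]: "(\<lambda>\<omega>. \<pi> \<iota> \<omega> x) \<in> measurable M (count_space UNIV)"
  using measurable_comp[OF pi_meas U_meas_any[of "\<lambda>p. p x"]] by (simp add: o_def)

lemma prob_digit:
  assumes "x < b" "d < b"
  shows "prob {\<omega>\<in>space M. \<pi> \<iota> \<omega> x = d} = 1 / real b"
proof -
  have "{\<omega>\<in>space M. \<pi> \<iota> \<omega> x = d} = \<pi> \<iota> -` {p. p permutes {0..<b} \<and> p x = d} \<inter> space M"
    using pi_space by auto
  also have "prob \<dots> = measure (distr M U (\<pi> \<iota>)) {p. p permutes {0..<b} \<and> p x = d}"
    by (subst measure_distr[OF pi_meas]) (auto simp: sets_uniform_count_measure)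
  also have "\<dots> = 1 / real b" using unif measure_PS_fix[OF assms] by simp
  finally show ?thesis .
qed

lemma prob_digits:
  assumes \<iota>: "inj \<iota>" and xs: "\<forall>i. xs i < b" and e: "\<forall>i<q. e i < b"
  shows "prob {\<omega>\<in>space M. \<forall>i<q. \<pi> (\<iota> i) \<omega> (xs i) = e i} = (1 / real b) ^ q"
proof (cases "q = 0")
  case True then show ?thesis by (simp add: prob_space)
next
  case False
  define A where "A j = {p. p permutes {0..<b} \<and> (\<forall>i<q. \<iota> i = j \<longrightarrow> p (xs i) = e i)}" for j
  have Ai: "A (\<iota> i) = {p. p permutes {0..<b} \<and> p (xs i) = e i}" if "i < q" for i
    using \<iota> that unfolding A_def inj_def by auto
  have "{\<omega>\<in>space M. \<forall>i<q. \<pi> (\<iota> i) \<omega> (xs i) = e i} = (\<Inter>j\<in>\<iota> ` {..<q}. \<pi> j -` A j \<inter> space M)"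
    using False pi_space unfolding A_def by auto
  also have "prob \<dots> = (\<Prod>j\<in>\<iota> ` {..<q}. prob (\<pi> j -` A j \<inter> space M))"
    using False by (intro indep_varsD[OF indep]) (auto simp: sets_uniform_count_measure A_def)
  also have "\<dots> = (\<Prod>i<q. prob (\<pi> (\<iota> i) -` A (\<iota> i) \<inter> space M))"
    using \<iota> by (subst prod.reindex) (auto simp: inj_on_def inj_def)
  also have "\<dots> = (\<Prod>i<q. 1 / real b)"
  proof (rule prod.cong[OF refl])
    fix i assume i: "i \<in> {..<q}"
    have "\<pi> (\<iota> i) -` A (\<iota> i) \<inter> space M = {\<omega>\<in>space M. \<pi> (\<iota> i) \<omega> (xs i) = e i}"
      using Ai[of i] i pi_space by auto
    then show "prob (\<pi> (\<iota> i) -` A (\<iota> i) \<inter> space M) = 1 / real b"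
      using prob_digit[of "xs i" "e i" "\<iota> i"] xs e i by simp
  qed
  finally show ?thesis by simp
qed

definition Tf :: "(nat \<Rightarrow> 'i) \<Rightarrow> (nat \<Rightarrow> nat) \<Rightarrow> 'w \<Rightarrow> real" where
  "Tf \<iota> xs \<omega> = (\<Sum>k. real (\<pi> (\<iota> k) \<omega> (xs k)) / real b ^ Suc k)"

lemma Tf_meas[measurable]: "Tf \<iota> xs \<in> borel_measurable M"
  unfolding Tf_def by measurable

lemma prob_Vf_eq:
  assumes \<iota>: "inj \<iota>" and xs: "\<forall>i. xs i < b" and c: "c < b ^ q"
  shows "prob {\<omega>\<in>space M. Vf b (\<lambda>k. \<pi> (\<iota> k) \<omega> (xs k)) q = c} = (1 / real b) ^ q"
proof -
  have "{\<omega>\<in>space M. Vf b (\<lambda>k. \<pi> (\<iota> k) \<omega> (xs k)) q = c} =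
        {\<omega>\<in>space M. \<forall>i<q. \<pi> (\<iota> i) \<omega> (xs i) = c div b ^ (q - 1 - i) mod b}"
  proof (intro Collect_cong conj_cong refl)
    fix \<omega> assume "\<omega> \<in> space M"
    then show "Vf b (\<lambda>k. \<pi> (\<iota> k) \<omega> (xs k)) q = c \<longleftrightarrow> (\<forall>i<q. \<pi> (\<iota> i) \<omega> (xs i) = c div b ^ (q - 1 - i) mod b)"
      using b2 c pi_lt xs by (intro Vf_eq_iff) auto
  qed
  also have "prob \<dots> = (1 / real b) ^ q"
    using b2 by (intro prob_digits[OF \<iota> xs]) auto
  finally show ?thesis .
qed

lemma prob_Vf_less:
  assumes \<iota>: "inj \<iota>" and xs: "\<forall>i. xs i < b"
  shows "prob {\<omega>\<in>space M. Vf b (\<lambda>k. \<pi> (\<iota> k) \<omega> (xs k)) q < c} = real (min c (b ^ q)) / real b ^ q"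
proof -
  let ?V = "\<lambda>\<omega>. Vf b (\<lambda>k. \<pi> (\<iota> k) \<omega> (xs k)) q"
  have lt: "?V \<omega> < b ^ q" if "\<omega> \<in> space M" for \<omega>
    using that pi_lt xs by (intro Vf_lt) auto
  have "{\<omega>\<in>space M. ?V \<omega> < c} = (\<Union>c'\<in>{..<min c (b ^ q)}. {\<omega>\<in>space M. ?V \<omega> = c'})"
    using lt by auto
  also have "prob \<dots> = (\<Sum>c'\<in>{..<min c (b ^ q)}. prob {\<omega>\<in>space M. ?V \<omega> = c'})"
  proof (rule finite_measure_finite_Union)
    show "(\<lambda>c'. {\<omega>\<in>space M. ?V \<omega> = c'}) ` {..<min c (b ^ q)} \<subseteq> events"
    proof (rule image_subsetI)
      fix c' assume "c' \<in> {..<min c (b ^ q)}"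
      then have c': "c' < b ^ q" by simp
      have "{\<omega>\<in>space M. ?V \<omega> = c'} =
        {\<omega>\<in>space M. \<forall>i<q. \<pi> (\<iota> i) \<omega> (xs i) = c' div b ^ (q - 1 - i) mod b}"
      proof (intro Collect_cong conj_cong refl)
        fix \<omega> assume "\<omega> \<in> space M"
        then show "?V \<omega> = c' \<longleftrightarrow> (\<forall>i<q. \<pi> (\<iota> i) \<omega> (xs i) = c' div b ^ (q - 1 - i) mod b)"
          using b2 c' pi_lt xs by (intro Vf_eq_iff) auto
      qed
      also have "\<dots> \<in> events" by measurable
      finally show "{\<omega>\<in>space M. ?V \<omega> = c'} \<in> events" .
    qed
  qed (auto simp: disjoint_family_on_def)
  also have "\<dots> = (\<Sum>c'\<in>{..<min c (b ^ q)}. (1 / real b) ^ q)"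
    by (intro sum.cong refl prob_Vf_eq[OF \<iota> xs]) auto
  also have "\<dots> = real (min c (b ^ q)) / real b ^ q"
    by (simp add: power_divide)
  finally show ?thesis .
qed

end

context scr begin

lemma Vf_meas[measurable]: "(\<lambda>\<omega>. Vf b (\<lambda>k. \<pi> (\<iota> k) \<omega> (xs k)) q) \<in> measurable M (count_space UNIV)"
  by (induction q) simp_all

lemma T_bounds:
  assumes xs: "\<forall>i. xs i < b" and \<omega>: "\<omega> \<in> space M"
  shows "real (Vf b (\<lambda>k. \<pi> (\<iota> k) \<omega> (xs k)) q) / real b ^ q \<le> Tf \<iota> xs \<omega>"
    and "Tf \<iota> xs \<omega> \<le> (real (Vf b (\<lambda>k. \<pi> (\<iota> k) \<omega> (xs k)) q) + 1) / real b ^ q"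
proof -
  have e: "\<forall>k. \<pi> (\<iota> k) \<omega> (xs k) < b" using xs \<omega> pi_lt by auto
  show "real (Vf b (\<lambda>k. \<pi> (\<iota> k) \<omega> (xs k)) q) / real b ^ q \<le> Tf \<iota> xs \<omega>"
    using digit_series(2)[OF b2 e, of q] unfolding Tf_def by simp
  show "Tf \<iota> xs \<omega> \<le> (real (Vf b (\<lambda>k. \<pi> (\<iota> k) \<omega> (xs k)) q) + 1) / real b ^ q"
    using digit_series(3)[OF b2 e, of q] unfolding Tf_def by simp
qed

lemma T_01:
  assumes xs: "\<forall>i. xs i < b" and \<omega>: "\<omega> \<in> space M"
  shows "0 \<le> Tf \<iota> xs \<omega>" "Tf \<iota> xs \<omega> \<le> 1"
  using T_bounds[OF xs \<omega>, where q=0 and \<iota>=\<iota>] by auto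

lemma cdf_T:
  assumes \<iota>: "inj \<iota>" and xs: "\<forall>i. xs i < b" and x: "0 \<le> x" "x \<le> 1"
  shows "prob {\<omega>\<in>space M. Tf \<iota> xs \<omega> \<le> x} = x"
proof -
  let ?F = "prob {\<omega>\<in>space M. Tf \<iota> xs \<omega> \<le> x}"
  let ?V = "\<lambda>q \<omega>. Vf b (\<lambda>k. \<pi> (\<iota> k) \<omega> (xs k)) q"
  have bnd: "\<bar>?F - x\<bar> \<le> (1 / real b) ^ q" for q
  proof -
    define c where "c = nat \<lfloor>x * real b ^ q\<rfloor>"
    have bq: "0 < real b ^ q" using b2 by simp
    have c1: "real c \<le> x * real b ^ q" "x * real b ^ q < real c + 1"
      unfolding c_def using x bq by (auto simp: of_nat_floor)
    have cle: "c \<le> b ^ q"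
    proof -
      have "real c \<le> real b ^ q" using c1 x bq by (smt (verit) mult_left_le_one_le)
      then show ?thesis by (metis of_nat_le_iff of_nat_power)
    qed
    have lo: "real c / real b ^ q \<le> ?F"
    proof -
      have "{\<omega>\<in>space M. ?V q \<omega> < c} \<subseteq> {\<omega>\<in>space M. Tf \<iota> xs \<omega> \<le> x}"
      proof safe
        fix \<omega> assume \<omega>: "\<omega> \<in> space M" and lt: "?V q \<omega> < c"
        have "real (?V q \<omega>) + 1 \<le> real c" using lt by linarith
        then have "(real (?V q \<omega>) + 1) / real b ^ q \<le> real c / real b ^ q"
          using bq by (intro divide_right_mono) auto
        also have "\<dots> \<le> x" using c1 bq by (simp add: divide_le_eq)
        finally show "Tf \<iota> xs \<omega> \<le> x" using T_bounds(2)[OF xs \<omega>, where \<iota>=\<iota> and q=q] by linarith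
      qed
      then have "prob {\<omega>\<in>space M. ?V q \<omega> < c} \<le> ?F"
        by (intro finite_measure_mono) measurable
      then show ?thesis using prob_Vf_less[OF \<iota> xs, of q c] cle by simp
    qed
    have hi: "?F \<le> (real c + 1) / real b ^ q"
    proof -
      have "{\<omega>\<in>space M. Tf \<iota> xs \<omega> \<le> x} \<subseteq> {\<omega>\<in>space M. ?V q \<omega> < c + 1}"
      proof safe
        fix \<omega> assume \<omega>: "\<omega> \<in> space M" and le: "Tf \<iota> xs \<omega> \<le> x"
        have "real (?V q \<omega>) / real b ^ q \<le> x" using T_bounds(1)[OF xs \<omega>, where \<iota>=\<iota> and q=q] le by linarith
        then have "real (?V q \<omega>) \<le> x * real b ^ q" using bq by (simp add: divide_le_eq)
        then have "real (?V q \<omega>) < real c + 1" using c1 by linarith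
        then show "?V q \<omega> < c + 1" by linarith
      qed
      then have "?F \<le> prob {\<omega>\<in>space M. ?V q \<omega> < c + 1}"
        by (intro finite_measure_mono) measurable
      also have "\<dots> = real (min (c + 1) (b ^ q)) / real b ^ q" by (rule prob_Vf_less[OF \<iota> xs])
      also have "\<dots> \<le> real (c + 1) / real b ^ q" using bq by (intro divide_right_mono) auto
      finally show ?thesis by (simp add: add.commute)
    qed
    have "(x * real b ^ q - 1) / real b ^ q \<le> real c / real b ^ q"
      using c1 bq by (intro divide_right_mono) auto
    moreover have "(x * real b ^ q - 1) / real b ^ q = x - 1 / real b ^ q"
      using bq by (simp add: diff_divide_distrib)
    ultimately have "real c / real b ^ q \<ge> x - 1 / real b ^ q" by simp
    moreover have "(real c + 1) / real b ^ q \<le> (x * real b ^ q + 1) / real b ^ q"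
      using c1 bq by (intro divide_right_mono) auto
    moreover have "(x * real b ^ q + 1) / real b ^ q = x + 1 / real b ^ q"
      using bq by (simp add: add_divide_distrib)
    ultimately show ?thesis using lo hi by (simp add: power_divide abs_le_iff)
  qed
  show ?thesis
  proof (rule ccontr)
    assume "?F \<noteq> x"
    then have "0 < \<bar>?F - x\<bar>" by simp
    then obtain q where "(1 / real b) ^ q < \<bar>?F - x\<bar>"
      using real_arch_pow_inv[of "\<bar>?F - x\<bar>" "1 / real b"] b2 by auto
    then show False using bnd[of q] by simp
  qed
qed

lemma law_T:
  assumes \<iota>: "inj \<iota>" and xs: "\<forall>i. xs i < b"
  shows "distr M borel (Tf \<iota> xs) = uniform_measure lborel {0..1::real}"
proof (rule cdf_unique)
  show "real_distribution (distr M borel (Tf \<iota> xs))"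
    by (rule real_distribution_distr[OF Tf_meas])
  show "real_distribution (uniform_measure lborel {0..1::real})"
  proof -
    interpret p: prob_space "uniform_measure lborel {0..1::real}"
      by (rule prob_space_uniform_measure) auto
    show ?thesis by unfold_locales simp
  qed
  show "cdf (distr M borel (Tf \<iota> xs)) = cdf (uniform_measure lborel {0..1::real})"
  proof
    fix x :: real
    have "cdf (distr M borel (Tf \<iota> xs)) x = prob {\<omega>\<in>space M. Tf \<iota> xs \<omega> \<le> x}"
      unfolding cdf_def2 by (subst measure_distr) (auto intro!: arg_cong[where f=prob])
    also have "\<dots> = max 0 (min x 1)"
    proof -
      consider "x < 0" | "0 \<le> x" "x \<le> 1" | "1 < x" by linarith
      then show ?thesis
      proof cases
        case 1
        have "Tf \<iota> xs \<omega> \<ge> 0" if "\<omega> \<in> space M" for \<omega> using T_01(1)[OF xs that] .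
        then have E: "{\<omega>\<in>space M. Tf \<iota> xs \<omega> \<le> x} = {}" using 1 by force
        show ?thesis using 1 by (subst E) simp
      next
        case 2 then show ?thesis using cdf_T[OF \<iota> xs] by simp
      next
        case 3
        have "Tf \<iota> xs \<omega> \<le> 1" if "\<omega> \<in> space M" for \<omega> using T_01(2)[OF xs that] .
        then have E: "{\<omega>\<in>space M. Tf \<iota> xs \<omega> \<le> x} = space M" using 3 by force
        show ?thesis using 3 prob_space by (subst E) simp
      qed
    qed
    also have "\<dots> = cdf (uniform_measure lborel {0..1::real}) x"
    proof -
      have "cdf (uniform_measure lborel {0..1::real}) x =
            enn2real (emeasure lborel ({0..1} \<inter> {..x}) / emeasure lborel {0..1::real})"
        unfolding cdf_def2 measure_def by (subst emeasure_uniform_measure) auto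
      also have "\<dots> = enn2real (emeasure lborel ({0..1} \<inter> {..x}))" by (simp add: divide_ennreal_def)
      also have "\<dots> = max 0 (min x 1)"
      proof -
        consider "x < 0" | "0 \<le> x" "x \<le> 1" | "1 < x" by linarith
        then show ?thesis
        proof cases
          case 1
          then have "{0..1} \<inter> {..x} = ({}::real set)" by auto
          then show ?thesis using 1 by simp
        next
          case 2
          then have "{0..1} \<inter> {..x} = {0..x}" by auto
          then show ?thesis using 2 by simp
        next
          case 3
          then have "{0..1} \<inter> {..x} = {0..1::real}" by auto
          then show ?thesis using 3 by simp
        qed
      qed
      finally show ?thesis by simp
    qed
    finally show "cdf (distr M borel (Tf \<iota> xs)) x = cdf (uniform_measure lborel {0..1::real}) x" .
  qed
qed

end

context scr begin

lemma null_pair: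
  assumes \<iota>: "inj \<iota>" and xs: "\<forall>i. xs i < b"
  and \<Phi>: "\<Phi> \<in> sets (PiM (- range \<iota>) (\<lambda>_. U) \<Otimes>\<^sub>M borel)"
  and slice: "\<And>x. x \<in> space (PiM (- range \<iota>) (\<lambda>_. U)) \<Longrightarrow>
                  AE t in lborel. t \<in> {0..1} \<longrightarrow> (x, t) \<notin> \<Phi>"
  shows "AE \<omega> in M. (restrict (\<lambda>i. \<pi> i \<omega>) (- range \<iota>), Tf \<iota> xs \<omega>) \<notin> \<Phi>"
proof -
  let ?J = "- range \<iota>" and ?K = "range \<iota>"
  let ?N1 = "PiM ?J (\<lambda>_. U)" and ?N2 = "PiM ?K (\<lambda>_. U)"
  let ?X = "\<lambda>\<omega>. restrict (\<lambda>i. \<pi> i \<omega>) ?J" and ?Y = "\<lambda>\<omega>. restrict (\<lambda>i. \<pi> i \<omega>) ?K"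
  let ?U01 = "uniform_measure lborel {0..1::real}"
  define f where "f y = (\<Sum>k. real (y (\<iota> k) (xs k)) / real b ^ Suc k)" for y :: "'i \<Rightarrow> nat \<Rightarrow> nat"
  have fm: "f \<in> borel_measurable ?N2"
  proof -
    have "(\<lambda>y. real (y (\<iota> k) (xs k)) / real b ^ Suc k) \<in> borel_measurable ?N2" for k
    proof -
      have "(\<lambda>y. y (\<iota> k)) \<in> measurable ?N2 U" by (rule measurable_component_singleton) auto
      from measurable_comp[OF this U_meas_borel[of "\<lambda>p. real (p (xs k)) / real b ^ Suc k"]]
      show ?thesis by (simp add: o_def)
    qed
    then show ?thesis unfolding f_def by measurable
  qed
  have T_eq: "Tf \<iota> xs = f \<circ> ?Y" by (auto simp: fun_eq_iff f_def Tf_def)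
  have ind0: "indep_var ?N1 ?X ?N2 ?Y" by (rule indep_var_restrict[OF indep]) auto
  have Xm: "?X \<in> measurable M ?N1" and Ym: "?Y \<in> measurable M ?N2"
    using indep_var_rv1[OF ind0] indep_var_rv2[OF ind0] by auto
  have dist: "distr M (?N1 \<Otimes>\<^sub>M ?N2) (\<lambda>\<omega>. (?X \<omega>, ?Y \<omega>)) = distr M ?N1 ?X \<Otimes>\<^sub>M distr M ?N2 ?Y"
    using ind0 unfolding indep_var_distribution_eq by simp
  have XYm: "(\<lambda>\<omega>. (?X \<omega>, ?Y \<omega>)) \<in> measurable M (?N1 \<Otimes>\<^sub>M ?N2)"
    using Xm Ym by (rule measurable_Pair)
  define \<Phi>' where "\<Phi>' = (\<lambda>(x, y). (x, f y)) -` \<Phi> \<inter> space (?N1 \<Otimes>\<^sub>M ?N2)"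
  have gm: "(\<lambda>(x, y). (x, f y)) \<in> measurable (?N1 \<Otimes>\<^sub>M ?N2) (?N1 \<Otimes>\<^sub>M borel)"
    using fm by measurable
  have \<Phi>': "\<Phi>' \<in> sets (?N1 \<Otimes>\<^sub>M ?N2)"
    unfolding \<Phi>'_def by (rule measurable_sets[OF gm \<Phi>])
  have Eeq: "{\<omega>\<in>space M. (?X \<omega>, Tf \<iota> xs \<omega>) \<in> \<Phi>} = (\<lambda>\<omega>. (?X \<omega>, ?Y \<omega>)) -` \<Phi>' \<inter> space M"
    using measurable_space[OF XYm] by (auto simp: \<Phi>'_def T_eq)
  have Eset: "{\<omega>\<in>space M. (?X \<omega>, Tf \<iota> xs \<omega>) \<in> \<Phi>} \<in> sets M"
    unfolding Eeq by (rule measurable_sets[OF XYm \<Phi>'])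
  interpret DY: prob_space "distr M ?N2 ?Y" by (rule prob_space_distr[OF Ym])
  have "emeasure M {\<omega>\<in>space M. (?X \<omega>, Tf \<iota> xs \<omega>) \<in> \<Phi>}
        = emeasure (distr M (?N1 \<Otimes>\<^sub>M ?N2) (\<lambda>\<omega>. (?X \<omega>, ?Y \<omega>))) \<Phi>'"
    unfolding Eeq using \<Phi>' XYm by (subst emeasure_distr) auto
  also have "\<dots> = emeasure (distr M ?N1 ?X \<Otimes>\<^sub>M distr M ?N2 ?Y) \<Phi>'" by (simp add: dist)
  also have "\<dots> = (\<integral>\<^sup>+ x. emeasure (distr M ?N2 ?Y) (Pair x -` \<Phi>') \<partial>distr M ?N1 ?X)"
  proof (rule DY.emeasure_pair_measure_alt)
    show "\<Phi>' \<in> sets (distr M ?N1 ?X \<Otimes>\<^sub>M distr M ?N2 ?Y)" using \<Phi>' by simp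
  qed
  also have "\<dots> = (\<integral>\<^sup>+ x. 0 \<partial>distr M ?N1 ?X)"
  proof (rule nn_integral_cong)
    fix x assume "x \<in> space (distr M ?N1 ?X)"
    then have x: "x \<in> space ?N1" by simp
    have P: "Pair x -` \<Phi> \<in> sets borel" using \<Phi> by (rule sets_Pair1)
    have "Pair x -` \<Phi>' = f -` (Pair x -` \<Phi>) \<inter> space ?N2"
      using x by (auto simp: \<Phi>'_def space_pair_measure)
    then have "emeasure (distr M ?N2 ?Y) (Pair x -` \<Phi>') = emeasure (distr (distr M ?N2 ?Y) borel f) (Pair x -` \<Phi>)"
      using P fm by (subst emeasure_distr) auto
    also have "distr (distr M ?N2 ?Y) borel f = distr M borel (f \<circ> ?Y)"
      using fm Ym by (rule distr_distr)
    also have "\<dots> = ?U01" using law_T[OF \<iota> xs] by (simp add: T_eq)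
    also have "emeasure ?U01 (Pair x -` \<Phi>) = emeasure lborel ({0..1} \<inter> Pair x -` \<Phi>) / emeasure lborel {0..1::real}"
      using P by (subst emeasure_uniform_measure) auto
    also have "emeasure lborel ({0..1} \<inter> Pair x -` \<Phi>) = 0"
    proof -
      have "AE t in lborel. t \<notin> {0..1} \<inter> Pair x -` \<Phi>" using slice[OF x] by auto
      then show ?thesis
        using P by (subst (asm) AE_iff_measurable[of "{0..1} \<inter> Pair x -` \<Phi>"]) auto
    qed
    finally have "emeasure (distr M ?N2 ?Y) (Pair x -` \<Phi>') = 0 / emeasure lborel {0..1::real}" .
    then show "emeasure (distr M ?N2 ?Y) (Pair x -` \<Phi>') = 0" by simp
  qed
  also have "\<dots> = 0" by simp
  finally have "emeasure M {\<omega>\<in>space M. (?X \<omega>, Tf \<iota> xs \<omega>) \<in> \<Phi>} = 0" .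
  then show ?thesis
    using Eset by (subst AE_iff_measurable[of "{\<omega>\<in>space M. (?X \<omega>, Tf \<iota> xs \<omega>) \<in> \<Phi>}"]) auto
qed

end

lemma coord_upd_nth[simp]: "coord_upd v j x $ k = (if k = j then x else v $ k)"
  by (simp add: coord_upd_def)

lemma vec_meas:
  fixes f :: "'a \<Rightarrow> real ^ 'd"
  assumes "\<And>j. (\<lambda>x. f x $ j) \<in> borel_measurable N"
  shows "f \<in> borel_measurable N"
proof (subst borel_measurable_euclidean_space, intro ballI)
  fix i :: "real ^ 'd" assume "i \<in> Basis"
  then obtain j where i: "i = axis j 1" by (auto simp: Basis_vec_def)
  show "(\<lambda>x. f x \<bullet> i) \<in> borel_measurable N"
    using assms[of j] unfolding i by (simp add: inner_axis)
qed

lemma vec_nth_meas[measurable]: "(\<lambda>x::real^'d. x $ j) \<in> borel_measurable borel"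
  by (intro borel_measurable_continuous_onI continuous_intros)

lemma open_cube: "open (open_unit_cube :: (real ^ 'd) set)"
proof -
  have "open_unit_cube = (\<Inter>j\<in>UNIV. {x::real^'d. x $ j > 0} \<inter> {x. x $ j < 1})"
    by (auto simp: open_unit_cube_def)
  also have "open \<dots>"
    by (intro open_INT finite_UNIV ballI)
       (auto intro!: open_Int open_halfspace_component_lt_cart open_halfspace_component_gt_cart)
  finally show ?thesis .
qed

lemma cube_sets[measurable]: "open_unit_cube \<in> sets borel"
  by (rule borel_open[OF open_cube])

lemma gext_meas:
  fixes h :: "real ^ 'd \<Rightarrow> real"
  assumes "h \<in> borel_measurable (restrict_space borel open_unit_cube)"
  shows "(\<lambda>v. indicator open_unit_cube v * h v) \<in> borel_measurable borel"
  using assms by (subst (asm) borel_measurable_restrict_space_iff) auto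

context scr begin

lemma AE_T_open:
  assumes \<iota>: "inj \<iota>" and xs: "\<forall>i. xs i < b"
  shows "AE \<omega> in M. 0 < Tf \<iota> xs \<omega> \<and> Tf \<iota> xs \<omega> < 1"
proof -
  let ?U01 = "uniform_measure lborel {0..1::real}"
  have z: "emeasure lborel {0, 1::real} = 0"
    using finite_imp_null_set_lborel[of "{0, 1::real}"] by (auto simp: null_sets_def)
  have "emeasure ?U01 {0, 1} = 0"
    by (subst emeasure_uniform_measure) (auto simp: z)
  then have "AE t in ?U01. t \<notin> {0, 1}"
    by (subst AE_iff_measurable[of "{0, 1}"]) auto
  then have "AE t in distr M borel (Tf \<iota> xs). t \<notin> {0, 1}" by (simp only: law_T[OF \<iota> xs])
  then have "AE \<omega> in M. Tf \<iota> xs \<omega> \<notin> {0, 1}"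
    by (subst (asm) AE_distr_iff) auto
  then show ?thesis
  proof (rule AE_mp[OF _ AE_I2], intro impI)
    fix \<omega> assume "\<omega> \<in> space M" "Tf \<iota> xs \<omega> \<notin> {0, 1}"
    then show "0 < Tf \<iota> xs \<omega> \<and> Tf \<iota> xs \<omega> < 1"
      using T_01[OF xs, of \<omega> \<iota>] by auto
  qed
qed

end

locale scr2 = scr M b \<pi> for M :: "'w measure" and b :: nat
  and \<pi> :: "('d::finite) \<times> nat list \<Rightarrow> 'w \<Rightarrow> nat \<Rightarrow> nat"
begin

lemma scoord_eq_Tf:
  "scramble_coord b (\<lambda>\<iota>. \<pi> \<iota> \<omega>) j x = Tf (\<lambda>k. (j, map (digit b x) [1..<Suc k])) (\<lambda>k. digit b x (Suc k)) \<omega>"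
  by (simp add: scramble_coord_def Tf_def)

lemma inj_pre: "inj (\<lambda>k. (j, map (digit b x) [1..<Suc k]))"
proof (rule injI)
  fix k l assume "(j, map (digit b x) [1..<Suc k]) = (j, map (digit b x) [1..<Suc l])"
  then have "length (map (digit b x) [1..<Suc k]) = length (map (digit b x) [1..<Suc l])" by simp
  then show "k = l" by (simp only: length_map length_upt)
qed

lemma digit_lt_b: "\<forall>k. digit b x (Suc k) < b"
  using b2 by (simp add: digit_lt)

lemma AE_point_cube: "AE \<omega> in M. scramble_point b (\<lambda>\<iota>. \<pi> \<iota> \<omega>) w \<in> open_unit_cube"
proof -
  have "AE \<omega> in M. \<forall>j\<in>UNIV. 0 < scramble_coord b (\<lambda>\<iota>. \<pi> \<iota> \<omega>) j (w $ j) \<and> scramble_coord b (\<lambda>\<iota>. \<pi> \<iota> \<omega>) j (w $ j) < 1"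
  proof (rule AE_finite_allI)
    fix j :: 'd
    show "AE \<omega> in M. 0 < scramble_coord b (\<lambda>\<iota>. \<pi> \<iota> \<omega>) j (w $ j) \<and> scramble_coord b (\<lambda>\<iota>. \<pi> \<iota> \<omega>) j (w $ j) < 1"
      unfolding scoord_eq_Tf by (rule AE_T_open[OF inj_pre digit_lt_b])
  qed simp
  then show ?thesis by (simp add: scramble_point_def open_unit_cube_def)
qed

end

context scr2 begin

lemma comp_meas:
  assumes "i \<in> J"
  shows "(\<lambda>x. F (x i) :: real) \<in> borel_measurable (PiM J (\<lambda>_. U))"
  using measurable_comp[OF measurable_component_singleton[OF assms] U_meas_borel[of F]]
  by (simp add: o_def)

lemma scoord_meas:
  assumes "\<forall>k. (j, map (digit b y) [1..<Suc k]) \<in> J"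
  shows "(\<lambda>x. scramble_coord b x j y) \<in> borel_measurable (PiM J (\<lambda>_. U))"
proof -
  have "(\<lambda>x. real (x (j, map (digit b y) [1..<Suc k]) (digit b y (Suc k))) / real b ^ Suc k)
          \<in> borel_measurable (PiM J (\<lambda>_. U))" for k
    using comp_meas[OF assms[rule_format, of k], of "\<lambda>p. real (p (digit b y (Suc k))) / real b ^ Suc k"]
    by simp
  then show ?thesis unfolding scramble_coord_def by (rule borel_measurable_suminf)
qed

lemma scoord_split:
  assumes \<omega>: "\<omega> \<in> space M"
  shows "scramble_coord b (\<lambda>\<iota>. \<pi> \<iota> \<omega>) j w =
    (\<Sum>l<s. real (\<pi> (j, map (digit b w) [1..<Suc l]) \<omega> (digit b w (Suc l))) / real b ^ Suc l)
    + Tf (\<lambda>q. (j, map (digit b w) [1..<Suc (s + q)])) (\<lambda>q. digit b w (Suc (s + q))) \<omega> / real b ^ s"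
proof -
  let ?f = "\<lambda>l. real (\<pi> (j, map (digit b w) [1..<Suc l]) \<omega> (digit b w (Suc l))) / real b ^ Suc l"
  let ?g = "\<lambda>q. real (\<pi> (j, map (digit b w) [1..<Suc (s + q)]) \<omega> (digit b w (Suc (s + q)))) / real b ^ Suc q"
  have e: "\<forall>l. \<pi> (j, map (digit b w) [1..<Suc l]) \<omega> (digit b w (Suc l)) < b"
    using pi_lt[OF \<omega>] digit_lt_b by auto
  have sf: "summable ?f" using digit_series(1)[OF b2 e] .
  have e2: "\<forall>q. \<pi> (j, map (digit b w) [1..<Suc (s + q)]) \<omega> (digit b w (Suc (s + q))) < b"
    using e by auto
  have sf2: "summable ?g" using digit_series(1)[OF b2 e2] .
  have "scramble_coord b (\<lambda>\<iota>. \<pi> \<iota> \<omega>) j w = suminf ?f" by (simp add: scramble_coord_def)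
  also have "\<dots> = (\<Sum>n. ?f (n + s)) + (\<Sum>l<s. ?f l)" by (rule suminf_split_initial_segment[OF sf])
  also have "(\<lambda>n. ?f (n + s)) = (\<lambda>n. ?g n / real b ^ s)"
    by (rule ext) (simp add: add.commute power_add divide_divide_eq_left mult.commute)
  also have "(\<Sum>n. ?g n / real b ^ s) = suminf ?g / real b ^ s" by (rule suminf_divide[OF sf2])
  finally show ?thesis by (simp add: Tf_def add.commute)
qed

end

context scr2 begin

lemma pair_AE:
  fixes h :: "real ^ 'd \<Rightarrow> real" and p1 p2 :: "real ^ 'd"
  assumes hm: "h \<in> borel_measurable (restrict_space borel open_unit_cube)"
  and hc: "\<And>v y. v \<in> open_unit_cube \<Longrightarrow>
      measure (uniform_measure lborel {0<..<1}) {x \<in> {0<..<1}. h (coord_upd v j0 x) = y} = 0"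
  and s1: "1 \<le> s" and sd: "digit b (p1 $ j0) s \<noteq> digit b (p2 $ j0) s"
  shows "AE \<omega> in M. h (scramble_point b (\<lambda>\<iota>. \<pi> \<iota> \<omega>) p1) \<noteq> h (scramble_point b (\<lambda>\<iota>. \<pi> \<iota> \<omega>) p2)"
proof -
  define w where "w = p2 $ j0"
  define \<iota> where "\<iota> q = (j0, map (digit b w) [1..<Suc (s + q)])" for q
  define xs where "xs q = digit b w (Suc (s + q))" for q
  define J where "J = - range \<iota>"
  let ?N1 = "PiM J (\<lambda>_. U)"
  have inj\<iota>: "inj \<iota>"
  proof (rule injI)
    fix k l assume "\<iota> k = \<iota> l"
    then have "length (map (digit b w) [1..<Suc (s + k)]) = length (map (digit b w) [1..<Suc (s + l)])"
      unfolding \<iota>_def by simp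
    then show "k = l" by (simp only: length_map length_upt)
  qed
  have xs: "\<forall>i. xs i < b" unfolding xs_def using digit_lt_b by auto
  have nS1: "(j, map (digit b (p1 $ j)) [1..<Suc k]) \<in> J" for j k
  proof (rule ccontr)
    assume "(j, map (digit b (p1 $ j)) [1..<Suc k]) \<notin> J"
    then obtain q where q: "(j, map (digit b (p1 $ j)) [1..<Suc k]) = \<iota> q" unfolding J_def by auto
    then have j: "j = j0" and L: "map (digit b (p1 $ j0)) [1..<Suc k] = map (digit b w) [1..<Suc (s + q)]"
      unfolding \<iota>_def prod.inject by blast+
    have "length (map (digit b (p1 $ j0)) [1..<Suc k]) = length (map (digit b w) [1..<Suc (s + q)])"
      using L by (rule arg_cong)
    then have k: "k = s + q" by (simp only: length_map length_upt)
    have "map (digit b (p1 $ j0)) [1..<Suc k] ! (s - 1) = map (digit b w) [1..<Suc (s + q)] ! (s - 1)"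
      using L by simp
    moreover have "map (digit b (p1 $ j0)) [1..<Suc k] ! (s - 1) = digit b (p1 $ j0) s"
      using s1 k by (subst nth_map) (auto simp del: upt_Suc simp add: nth_upt)
    moreover have "map (digit b w) [1..<Suc (s + q)] ! (s - 1) = digit b w s"
      using s1 by (subst nth_map) (auto simp del: upt_Suc simp add: nth_upt)
    ultimately have "digit b (p1 $ j0) s = digit b w s" by simp
    then show False using sd unfolding w_def by simp
  qed
  have nS2: "j \<noteq> j0 \<Longrightarrow> (j, l) \<in> J" for j l unfolding J_def \<iota>_def by auto
  have nS3: "l < s \<Longrightarrow> (j0, map (digit b w) [1..<Suc l]) \<in> J" for l
  proof (rule ccontr)
    assume "l < s" "(j0, map (digit b w) [1..<Suc l]) \<notin> J"
    then obtain q where "(j0, map (digit b w) [1..<Suc l]) = \<iota> q" unfolding J_def by auto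
    then have "length (map (digit b w) [1..<Suc l]) = length (map (digit b w) [1..<Suc (s + q)])"
      unfolding \<iota>_def by simp
    then have "l = s + q" by (simp only: length_map length_upt)
    then show False using \<open>l < s\<close> by simp
  qed
  define A where "A x = (\<Sum>l<s. real (x (j0, map (digit b w) [1..<Suc l]) (digit b w (Suc l))) / real b ^ Suc l)"
    for x :: "'d \<times> nat list \<Rightarrow> nat \<Rightarrow> nat"
  define Q0 where "Q0 x = (\<chi> j. if j = j0 then 0 else scramble_coord b x j (p2 $ j))"
    for x :: "'d \<times> nat list \<Rightarrow> nat \<Rightarrow> nat"
  define P where "P x = scramble_point b x p1" for x :: "'d \<times> nat list \<Rightarrow> nat \<Rightarrow> nat"
  define Qt where "Qt x t = coord_upd (Q0 x) j0 (A x + t / real b ^ s)" for x t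
  define g' where "g' v = indicator open_unit_cube v * h v" for v
  define \<Phi> where "\<Phi> = {z \<in> space (?N1 \<Otimes>\<^sub>M borel). P (fst z) \<in> open_unit_cube \<and>
      Qt (fst z) (snd z) \<in> open_unit_cube \<and> g' (P (fst z)) = g' (Qt (fst z) (snd z))}"
  have g'm[measurable]: "g' \<in> borel_measurable borel" unfolding g'_def by (rule gext_meas[OF hm])
  have Pm[measurable]: "P \<in> borel_measurable ?N1"
    unfolding P_def scramble_point_def by (intro vec_meas) (simp, rule scoord_meas, use nS1 in blast)
  have Am[measurable]: "A \<in> borel_measurable ?N1"
  proof -
    have "(\<lambda>x. real (x (j0, map (digit b w) [1..<Suc l]) (digit b w (Suc l))) / real b ^ Suc l) \<in> borel_measurable ?N1"
      if "l < s" for l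
      using comp_meas[OF nS3[OF that], of "\<lambda>p. real (p (digit b w (Suc l))) / real b ^ Suc l"] by simp
    then show ?thesis unfolding A_def by (intro borel_measurable_sum) auto
  qed
  have Cm: "(\<lambda>x. scramble_coord b x j (p2 $ j)) \<in> borel_measurable ?N1" if "j \<noteq> j0" for j
    using that by (intro scoord_meas) (simp add: nS2)
  have Qtm[measurable]: "(\<lambda>z. Qt (fst z) (snd z)) \<in> borel_measurable (?N1 \<Otimes>\<^sub>M borel)"
  proof (rule vec_meas)
    fix j
    show "(\<lambda>z. Qt (fst z) (snd z) $ j) \<in> borel_measurable (?N1 \<Otimes>\<^sub>M borel)"
    proof (cases "j = j0")
      case True
      then show ?thesis unfolding Qt_def by simp
    next
      case False
      have "(\<lambda>z. scramble_coord b (fst z) j (p2 $ j)) \<in> borel_measurable (?N1 \<Otimes>\<^sub>M borel)"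
        using measurable_comp[OF measurable_fst Cm[OF False]] by (simp add: o_def)
      then show ?thesis using False unfolding Qt_def Q0_def by simp
    qed
  qed
  have \<Phi>m: "\<Phi> \<in> sets (?N1 \<Otimes>\<^sub>M borel)" unfolding \<Phi>_def by measurable
  have X_space: "restrict (\<lambda>i. \<pi> i \<omega>) J \<in> space ?N1" if "\<omega> \<in> space M" for \<omega>
    using pi_space[OF that] by (auto simp: space_PiM space_uniform_count_measure)
  have slice: "AE t in lborel. t \<in> {0..1} \<longrightarrow> (x, t) \<notin> \<Phi>" if x: "x \<in> space ?N1" for x
  proof (cases "P x \<in> open_unit_cube \<and> (\<forall>j. j \<noteq> j0 \<longrightarrow> 0 < Q0 x $ j \<and> Q0 x $ j < 1)")
    case False
    have "(x, t) \<notin> \<Phi>" for t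
    proof
      assume "(x, t) \<in> \<Phi>"
      then have "P x \<in> open_unit_cube" "Qt x t \<in> open_unit_cube" unfolding \<Phi>_def by auto
      then show False using False unfolding Qt_def open_unit_cube_def by (auto split: if_splits)
    qed
    then show ?thesis by simp
  next
    case True
    define v where "v = coord_upd (Q0 x) j0 (1/2)"
    have v: "v \<in> open_unit_cube" using True unfolding v_def open_unit_cube_def by auto
    define y where "y = h (P x)"
    define Z where "Z = {z \<in> {0<..<1}. h (coord_upd v j0 z) = y}"
    have cu_in: "coord_upd v j0 z \<in> open_unit_cube" if "z \<in> {0<..<1}" for z
      using v that unfolding open_unit_cube_def by auto
    have Z_alt: "Z = {z \<in> space borel. z \<in> {0<..<1} \<and> g' (coord_upd v j0 z) = y}"
      unfolding Z_def g'_def using cu_in by auto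
    have cu_m[measurable]: "(\<lambda>z. coord_upd v j0 z) \<in> borel_measurable borel"
      by (rule vec_meas) simp
    have Zm: "Z \<in> sets borel" unfolding Z_alt by measurable
    interpret U0: prob_space "uniform_measure lborel {0<..<1::real}"
      by (rule prob_space_uniform_measure) auto
    have "measure (uniform_measure lborel {0<..<1}) Z = 0" using hc[OF v] unfolding Z_def .
    then have "emeasure (uniform_measure lborel {0<..<1::real}) Z = 0"
      by (simp add: U0.emeasure_eq_measure)
    moreover have "emeasure (uniform_measure lborel {0<..<1::real}) Z = emeasure lborel ({0<..<1} \<inter> Z) / emeasure lborel {0<..<1::real}"
      using Zm by (subst emeasure_uniform_measure) auto
    moreover have "{0<..<1} \<inter> Z = Z" unfolding Z_def by auto
    ultimately have "emeasure lborel Z = 0" by (simp add: divide_ennreal_def)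
    then have "AE z in lborel. z \<notin> Z" using Zm by (subst AE_iff_measurable[of Z]) auto
    then have aff: "AE t in lborel. A x + (1 / real b ^ s) * t \<notin> Z"
      using b2 Zm by (intro AE_borel_affine) auto
    then show ?thesis
    proof (rule AE_mp[OF _ AE_I2], intro impI notI)
      fix t assume nz: "A x + (1 / real b ^ s) * t \<notin> Z" and "t \<in> {0..1}" and tin: "(x, t) \<in> \<Phi>"
      then have Pc: "P x \<in> open_unit_cube" and Qc: "Qt x t \<in> open_unit_cube"
        and eq: "g' (P x) = g' (Qt x t)" unfolding \<Phi>_def by auto
      have QV: "Qt x t = coord_upd v j0 (A x + t / real b ^ s)"
        unfolding Qt_def v_def by (simp add: vec_eq_iff)
      have "A x + t / real b ^ s \<in> {0<..<1}" using Qc unfolding QV open_unit_cube_def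
        by (metis (no_types, lifting) coord_upd_nth greaterThanLessThan_iff mem_Collect_eq)
      moreover have "h (coord_upd v j0 (A x + t / real b ^ s)) = y"
        using eq Pc Qc unfolding QV g'_def y_def by simp
      ultimately have "A x + t / real b ^ s \<in> Z" unfolding Z_def by auto
      with nz show False by simp
    qed
  qed
  have ae1: "AE \<omega> in M. (restrict (\<lambda>i. \<pi> i \<omega>) J, Tf \<iota> xs \<omega>) \<notin> \<Phi>"
    unfolding J_def
    by (rule null_pair[OF inj\<iota> xs]) (use \<Phi>m slice in \<open>auto simp: J_def\<close>)
  have idP: "P (restrict (\<lambda>i. \<pi> i \<omega>) J) = scramble_point b (\<lambda>\<iota>. \<pi> \<iota> \<omega>) p1" for \<omega>
    unfolding P_def scramble_point_def scramble_coord_def using nS1 by (simp add: vec_eq_iff)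
  have idQ: "Qt (restrict (\<lambda>i. \<pi> i \<omega>) J) (Tf \<iota> xs \<omega>) = scramble_point b (\<lambda>\<iota>. \<pi> \<iota> \<omega>) p2"
    if \<omega>: "\<omega> \<in> space M" for \<omega>
  proof -
    have "A (restrict (\<lambda>i. \<pi> i \<omega>) J) =
      (\<Sum>l<s. real (\<pi> (j0, map (digit b w) [1..<Suc l]) \<omega> (digit b w (Suc l))) / real b ^ Suc l)"
      unfolding A_def using nS3 by (intro sum.cong) auto
    then have j0c: "A (restrict (\<lambda>i. \<pi> i \<omega>) J) + Tf \<iota> xs \<omega> / real b ^ s = scramble_coord b (\<lambda>\<iota>. \<pi> \<iota> \<omega>) j0 w"
      using scoord_split[OF \<omega>, of j0 w s] unfolding \<iota>_def xs_def by simp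
    have oc: "scramble_coord b (restrict (\<lambda>i. \<pi> i \<omega>) J) j (p2 $ j) = scramble_coord b (\<lambda>\<iota>. \<pi> \<iota> \<omega>) j (p2 $ j)"
      if "j \<noteq> j0" for j
      unfolding scramble_coord_def using nS2[OF that] by simp
    show ?thesis
      unfolding Qt_def Q0_def scramble_point_def using j0c oc by (simp add: vec_eq_iff w_def)
  qed
  show ?thesis
    using AE_space ae1 AE_point_cube[of p1] AE_point_cube[of p2]
  proof eventually_elim
    case (elim \<omega>)
    show ?case
    proof
      assume heq: "h (scramble_point b (\<lambda>\<iota>. \<pi> \<iota> \<omega>) p1) = h (scramble_point b (\<lambda>\<iota>. \<pi> \<iota> \<omega>) p2)"
      have "(restrict (\<lambda>i. \<pi> i \<omega>) J, Tf \<iota> xs \<omega>) \<in> \<Phi>"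
        unfolding \<Phi>_def using X_space[OF elim(1)] idP idQ[OF elim(1)] heq elim(3,4)
        by (simp add: space_pair_measure g'_def)
      with elim(2) show False by simp
    qed
  qed
qed

end

lemma box_iff:
  assumes "0 \<le> x" "0 < b"
  shows "nat \<lfloor>x * real b ^ r\<rfloor> = c \<longleftrightarrow> real c / real b ^ r \<le> x \<and> x < real (c + 1) / real b ^ r"
proof -
  have bp: "0 < real b ^ r" using assms by simp
  have "nat \<lfloor>x * real b ^ r\<rfloor> = c \<longleftrightarrow> \<lfloor>x * real b ^ r\<rfloor> = int c"
    using assms by auto
  also have "\<dots> \<longleftrightarrow> real c \<le> x * real b ^ r \<and> x * real b ^ r < real c + 1"
    by (simp add: floor_eq_iff)
  also have "\<dots> \<longleftrightarrow> real c / real b ^ r \<le> x \<and> x < real (c + 1) / real b ^ r"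
    using bp by (simp add: divide_le_eq less_divide_eq add.commute)
  finally show ?thesis .
qed

theorem lemma2:
  fixes b t m n :: nat
    and \<Theta> :: "real set"
    and g :: "real \<Rightarrow> real ^ 'd \<Rightarrow> real"
    and \<theta> :: real
    and u :: "nat \<Rightarrow> real ^ 'd"
    and M :: "'\<omega> measure"
    and \<pi> :: "'d \<times> nat list \<Rightarrow> '\<omega> \<Rightarrow> nat \<Rightarrow> nat"
  assumes b: "b \<ge> 2"
    and tm: "t \<le> m"
    and n: "n = b ^ m"
    and g_meas: "\<forall>th\<in>\<Theta>. g th \<in> borel_measurable (restrict_space borel open_unit_cube)"
    and g_cont: "\<forall>th\<in>\<Theta>. \<forall>j v a c y. v \<in> open_unit_cube \<and> 0 \<le> a \<and> a < c \<and> c \<le> 1 \<longrightarrow>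
        measure (uniform_measure lborel {a<..<c})
          {x \<in> {a<..<c}. g th (coord_upd v j x) = y} = 0"
    and \<theta>: "\<theta> \<in> \<Theta>"
    and net: "tmd_net b t m u"
    and M: "prob_space M"
    and indep: "prob_space.indep_vars M
        (\<lambda>_. uniform_count_measure {p. p permutes {0..<b}}) \<pi> UNIV"
    and unif: "\<forall>\<iota>. distr M (uniform_count_measure {p. p permutes {0..<b}}) (\<pi> \<iota>)
                  = uniform_count_measure {p. p permutes {0..<b}}"
  shows "AE \<omega> in M. \<forall>y. card {i. i < n \<and>
           g \<theta> (scramble_point b (\<lambda>\<iota>. \<pi> \<iota> \<omega>) (u i)) = y} \<le> b ^ t"
proof -
  interpret scr2 M b \<pi>
    by (rule scr2.intro, rule scr.intro[OF M]) (unfold_locales, use b indep unif in auto)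
  define j0 :: 'd where "j0 = undefined"
  define r where "r = m - t"
  define bx where "bx i = nat \<lfloor>u i $ j0 * real b ^ r\<rfloor>" for i
  let ?us = "\<lambda>\<omega> i. scramble_point b (\<lambda>\<iota>. \<pi> \<iota> \<omega>) (u i)"
  have b0: "0 < b" using b by simp
  have urange: "0 \<le> u i $ j \<and> u i $ j < 1" if "i < b ^ m" for i j
    using net that unfolding tmd_net_def by auto
  have boxcard: "card {i. i < b ^ m \<and> bx i = c} = b ^ t" if c: "c < b ^ r" for c
  proof -
    define k where "k j = (if j = j0 then r else 0)" for j
    define cc where "cc j = (if j = j0 then c else 0)" for j
    have sumk: "(\<Sum>j\<in>UNIV. k j) = r" unfolding k_def by simp
    have "real b ^ t / real b ^ m = 1 / real b ^ (\<Sum>j\<in>UNIV. k j)"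
    proof -
      have "real b ^ m = real b ^ t * real b ^ r" unfolding r_def using tm
        by (metis le_add_diff_inverse power_add)
      then show ?thesis using b0 unfolding sumk by simp
    qed
    moreover have "\<forall>j. cc j < b ^ k j" using c unfolding cc_def k_def by auto
    ultimately have "card {i. i < b ^ m \<and> (\<forall>j. real (cc j) / real b ^ k j \<le> u i $ j \<and>
                      u i $ j < real (cc j + 1) / real b ^ k j)} = b ^ t"
      using net unfolding tmd_net_def by blast
    moreover have "{i. i < b ^ m \<and> (\<forall>j. real (cc j) / real b ^ k j \<le> u i $ j \<and>
                      u i $ j < real (cc j + 1) / real b ^ k j)} = {i. i < b ^ m \<and> bx i = c}"
    proof (intro Collect_cong conj_cong refl)
      fix i assume i: "i < b ^ m"
      show "(\<forall>j. real (cc j) / real b ^ k j \<le> u i $ j \<and> u i $ j < real (cc j + 1) / real b ^ k j) \<longleftrightarrow> bx i = c"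
        unfolding bx_def using box_iff[of "u i $ j0" b r c] urange[OF i] b0
        by (auto simp: cc_def k_def)
    qed
    ultimately show ?thesis by simp
  qed
  have bx_lt: "bx i < b ^ r" if "i < b ^ m" for i
  proof -
    have "bx i = bx i" ..
    then have "real (bx i) / real b ^ r \<le> u i $ j0" unfolding bx_def
      using box_iff[of "u i $ j0" b r "bx i"] urange[OF that] b0 unfolding bx_def by auto
    then have "real (bx i) / real b ^ r < 1" using urange[OF that, of j0] by linarith
    then have "real (bx i) < real b ^ r" using b0 by (simp add: divide_less_eq)
    then show ?thesis by (metis of_nat_less_iff of_nat_power)
  qed
  have hm: "g \<theta> \<in> borel_measurable (restrict_space borel open_unit_cube)" using g_meas \<theta> by auto
  have hc: "\<And>v y. v \<in> open_unit_cube \<Longrightarrow>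
      measure (uniform_measure lborel {0<..<1}) {x \<in> {0<..<1}. g \<theta> (coord_upd v j0 x) = y} = 0"
    using g_cont \<theta> by fastforce
  let ?PP = "{(i, k). i < n \<and> k < n \<and> bx i \<noteq> bx k}"
  have fin: "finite ?PP"
    by (rule finite_subset[of _ "{..<n} \<times> {..<n}"]) auto
  have ae: "AE \<omega> in M. \<forall>ik\<in>?PP. g \<theta> (?us \<omega> (fst ik)) \<noteq> g \<theta> (?us \<omega> (snd ik))"
  proof (rule AE_finite_allI[OF fin])
    fix ik assume "ik \<in> ?PP"
    then obtain i k where ik: "ik = (i, k)" "i < n" "k < n" "bx i \<noteq> bx k" by auto
    have "\<exists>s\<in>{1..r}. digit b (u i $ j0) s \<noteq> digit b (u k $ j0) s"
    proof (rule ccontr)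
      assume "\<not> ?thesis"
      then have "bx i = bx k" unfolding bx_def using urange[of i j0] urange[of k j0] ik n b0
        by (intro digits_agree_floor) auto
      then show False using ik by simp
    qed
    then obtain s where s: "1 \<le> s" "digit b (u i $ j0) s \<noteq> digit b (u k $ j0) s" by auto
    show "AE \<omega> in M. g \<theta> (?us \<omega> (fst ik)) \<noteq> g \<theta> (?us \<omega> (snd ik))"
      using pair_AE[OF hm hc s] ik by simp
  qed
  then show ?thesis
  proof (rule AE_mp[OF _ AE_I2], intro impI allI)
    fix \<omega> y assume H: "\<forall>ik\<in>?PP. g \<theta> (?us \<omega> (fst ik)) \<noteq> g \<theta> (?us \<omega> (snd ik))"
    let ?S = "{i. i < n \<and> g \<theta> (?us \<omega> i) = y}"
    show "card ?S \<le> b ^ t"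
    proof (cases "?S = {}")
      case True show ?thesis by (subst True) simp
    next
      case False
      then obtain i0 where i0: "i0 \<in> ?S" by blast
      have "?S \<subseteq> {i. i < b ^ m \<and> bx i = bx i0}"
      proof safe
        fix i assume i: "i < n" "y = g \<theta> (?us \<omega> i)"
        then show "i < b ^ m" using n by simp
        show "bx i = bx i0"
        proof (rule ccontr)
          assume "bx i \<noteq> bx i0"
          then have "(i, i0) \<in> ?PP" using i i0 by auto
          then show False using H i i0 by force
        qed
      qed
      then have "card ?S \<le> card {i. i < b ^ m \<and> bx i = bx i0}"
        by (intro card_mono) auto
      also have "\<dots> = b ^ t" using boxcard bx_lt i0 n by auto
      finally show ?thesis .
    qed
  qed
qed


end
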